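(* Let $W$ be a well generated complex reflection group, $g\in W$ a parabolic quasi-Coxeter element and $W_g$ its parabolic closure. Then $\mathrm{RGS}(W,g)=\mathrm{RGS}(W,W_g)$.
   Context: $W\le\mathrm{GL}(V)$ is a finite group generated by unitary reflections, of rank $n=\operatorname{codim}V^W$, and well generated (generated by $n$ reflections). A good generating set of a reflection group $G$ is a set of $\operatorname{rank}(G)$ reflections generating $G$. Parabolic subgroups are pointwise stabilizers of subsets of $V$; $W_g$ is the smallest parabolic subgroup containing $g$. $\ell_R$ is reflection length. $g$ is parabolic quasi-Coxeter if some reduced reflection factorization of $g$ has factors forming a good generating set for a parabolic subgroup. For a reflection subgroup $W'$ of rank $k$, $\mathrm{RGS}(W,W')$ is the set of sets $\{t_1,\dots,t_{n-k}\}$ of $n-k$ reflections with $\langle W',t_1,\dots,t_{n-k}\rangle=W$. For $g$ with $\ell_R(g)=k$, $\mathrm{RGS}(W,g)$ is the set of sets $\{t_1,\dots,t_{n-k}\}$ of $n-k$ reflections for which there exists a reduced reflection factorization $g=t_{n-k+1}\cdots t_n$ such that $\{t_1,\dots,t_n\}$ generates $W$. *)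

theory Defs
  imports "HOL-Analysis.Analysis"
begin

text \<open>The ambient space is V = complex^'n; linear maps are matrices complex^'n^'n.
  Dimensions are complex dimensions (vec.dim, the vector space over the scalar field).\<close>

type_synonym 'n cmat = "complex^'n^'n"

inductive_set gen :: "'n::finite cmat set \<Rightarrow> 'n cmat set" for S where
  gen_one: "mat 1 \<in> gen S"
| gen_elt: "s \<in> S \<Longrightarrow> s \<in> gen S"
| gen_inv: "s \<in> S \<Longrightarrow> matrix_inv s \<in> gen S"
| gen_mult: "a \<in> gen S \<Longrightarrow> b \<in> gen S \<Longrightarrow> a ** b \<in> gen S"

definition fixspace :: "'n::finite cmat set \<Rightarrow> (complex^'n) set" where
  "fixspace G = {v. \<forall>w\<in>G. w *v v = v}"

definition grank :: "'n::finite cmat set \<Rightarrow> nat" where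
  "grank G = CARD('n) - vec.dim (fixspace G)"

definition is_reflection :: "'n::finite cmat \<Rightarrow> bool" where
  "is_reflection r \<longleftrightarrow> invertible r \<and> r \<noteq> mat 1 \<and>
     (\<exists>k>0. ((\<lambda>x. r ** x) ^^ k) (mat 1) = mat 1) \<and>
     vec.dim {v. r *v v = v} = CARD('n) - 1"

definition refls :: "'n::finite cmat set \<Rightarrow> 'n cmat set" where
  "refls W = {r \<in> W. is_reflection r}"

definition reflection_group :: "'n::finite cmat set \<Rightarrow> bool" where
  "reflection_group W \<longleftrightarrow> finite W \<and> (\<forall>w\<in>W. invertible w) \<and> W = gen (refls W)"

definition well_generated :: "'n::finite cmat set \<Rightarrow> bool" where
  "well_generated W \<longleftrightarrow> reflection_group W \<and>
     (\<exists>T. T \<subseteq> refls W \<and> finite T \<and> card T = grank W \<and> gen T = W)"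

definition mprod :: "'n::finite cmat list \<Rightarrow> 'n cmat" where
  "mprod ts = foldr (**) ts (mat 1)"

definition refl_length :: "'n::finite cmat set \<Rightarrow> 'n cmat \<Rightarrow> nat" where
  "refl_length W g = (LEAST k. \<exists>ts. length ts = k \<and> set ts \<subseteq> refls W \<and> mprod ts = g)"

definition reduced_refl_fact :: "'n::finite cmat set \<Rightarrow> 'n cmat \<Rightarrow> 'n cmat list \<Rightarrow> bool" where
  "reduced_refl_fact W g ts \<longleftrightarrow> set ts \<subseteq> refls W \<and> mprod ts = g \<and> length ts = refl_length W g"

definition pstab :: "'n::finite cmat set \<Rightarrow> (complex^'n) set \<Rightarrow> 'n cmat set" where
  "pstab W A = {w \<in> W. \<forall>v\<in>A. w *v v = v}"

definition parabolic :: "'n::finite cmat set \<Rightarrow> 'n cmat set \<Rightarrow> bool" where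
  "parabolic W P \<longleftrightarrow> (\<exists>A. P = pstab W A)"

definition pclosure :: "'n::finite cmat set \<Rightarrow> 'n cmat \<Rightarrow> 'n cmat set" where
  "pclosure W g = \<Inter>{P. parabolic W P \<and> g \<in> P}"

definition good_gen_set :: "'n::finite cmat set \<Rightarrow> 'n cmat set \<Rightarrow> bool" where
  "good_gen_set T G \<longleftrightarrow> finite T \<and> card T = grank G \<and> (\<forall>t\<in>T. is_reflection t) \<and> gen T = G"

definition parabolic_quasi_coxeter :: "'n::finite cmat set \<Rightarrow> 'n cmat \<Rightarrow> bool" where
  "parabolic_quasi_coxeter W g \<longleftrightarrow>
     (\<exists>ts P. reduced_refl_fact W g ts \<and> parabolic W P \<and> good_gen_set (set ts) P)"

definition RGS_sub :: "'n::finite cmat set \<Rightarrow> 'n cmat set \<Rightarrow> 'n cmat set set" where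
  "RGS_sub W W' = {T. finite T \<and> card T = grank W - grank W' \<and> T \<subseteq> refls W \<and>
                     gen (W' \<union> T) = W}"

definition RGS_elt :: "'n::finite cmat set \<Rightarrow> 'n cmat \<Rightarrow> 'n cmat set set" where
  "RGS_elt W g = {T. finite T \<and> card T = grank W - refl_length W g \<and> T \<subseteq> refls W \<and>
                    (\<exists>ts. reduced_refl_fact W g ts \<and> gen (T \<union> set ts) = W)}"

end

theory Submission
  imports Defs
begin

lemma minv: "invertible (A::'n::finite cmat) \<Longrightarrow> A ** matrix_inv A = mat 1 \<and> matrix_inv A ** A = mat 1"
  unfolding invertible_def matrix_inv_def by (rule someI_ex)

lemma minv_inv: "invertible (A::'n::finite cmat) \<Longrightarrow> invertible (matrix_inv A)"
  using minv unfolding invertible_def by blast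

lemma minv_inv2: "invertible (A::'n::finite cmat) \<Longrightarrow> matrix_inv (matrix_inv A) = A"
proof -
  assume a: "invertible A"
  let ?B = "matrix_inv A"
  have b: "invertible ?B" using a minv_inv by blast
  have "matrix_inv ?B = matrix_inv ?B ** (?B ** A)" using minv[OF a] by simp
  also have "\<dots> = (matrix_inv ?B ** ?B) ** A" by (simp add: matrix_mul_assoc)
  also have "\<dots> = A" using minv[OF b] by simp
  finally show ?thesis .
qed

lemma minv_mult: "invertible (A::'n::finite cmat) \<Longrightarrow> invertible (B::'n cmat) \<Longrightarrow> matrix_inv (A ** B) = matrix_inv B ** matrix_inv A"
proof -
  assume a: "invertible A" and b: "invertible B"
  have ab: "invertible (A ** B)" using a b invertible_mult by blast
  have "matrix_inv (A ** B) = matrix_inv (A ** B) ** ((A ** B) ** (matrix_inv B ** matrix_inv A))"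
  proof -
    have "(A ** B) ** (matrix_inv B ** matrix_inv A) = A ** (B ** matrix_inv B) ** matrix_inv A"
      by (simp add: matrix_mul_assoc)
    also have "\<dots> = mat 1" using minv[OF a] minv[OF b] by simp
    finally show ?thesis by simp
  qed
  also have "\<dots> = (matrix_inv (A ** B) ** (A ** B)) ** (matrix_inv B ** matrix_inv A)" by (simp add: matrix_mul_assoc)
  also have "\<dots> = matrix_inv B ** matrix_inv A" using minv[OF ab] by simp
  finally show ?thesis .
qed

lemma minv_one: "matrix_inv (mat 1 :: 'n::finite cmat) = mat 1"
proof -
  have i: "invertible (mat 1 :: 'n cmat)" unfolding invertible_def by (intro exI[of _ "mat 1"]) simp
  show ?thesis using minv[OF i] by simp
qed

lemma gen_closed:
  assumes "\<forall>s\<in>S. invertible (s::'n::finite cmat)" "x \<in> gen S"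
  shows "invertible x \<and> matrix_inv x \<in> gen S"
  using assms(2)
proof induction
  case gen_one
  then show ?case using minv_one gen.gen_one unfolding invertible_def
    by (metis matrix_mul_lid)
next
  case (gen_elt s)
  then show ?case using assms(1) gen.gen_inv by blast
next
  case (gen_inv s)
  then show ?case using assms(1) minv_inv minv_inv2 gen.gen_elt by metis
next
  case (gen_mult a b)
  then show ?case using invertible_mult minv_mult gen.gen_mult by metis
qed

lemma gen_sub:
  assumes "\<forall>s\<in>Y. invertible (s::'n::finite cmat)" "X \<subseteq> gen Y"
  shows "gen X \<subseteq> gen Y"
proof
  fix x assume "x \<in> gen X"
  then show "x \<in> gen Y"
  proof induction
    case gen_one then show ?case by (rule gen.gen_one)
  next
    case (gen_elt s) then show ?case using assms by blast
  next
    case (gen_inv s) then show ?case using assms gen_closed by blast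
  next
    case (gen_mult a b) then show ?case by (simp add: gen.gen_mult)
  qed
qed

lemma gen_mono: "\<forall>s\<in>Y. invertible (s::'n::finite cmat) \<Longrightarrow> X \<subseteq> Y \<Longrightarrow> gen X \<subseteq> gen Y"
  using gen_sub gen.gen_elt by blast

lemma gen_fix:
  assumes "\<forall>s\<in>S. invertible (s::'n::finite cmat) \<and> s *v v = v" "x \<in> gen S"
  shows "x *v v = v"
  using assms(2)
proof induction
  case gen_one then show ?case by simp
next
  case (gen_elt s) then show ?case using assms by blast
next
  case (gen_inv s)
  then have "matrix_inv s *v (s *v v) = v" using assms minv
    by (metis matrix_vector_mul_assoc matrix_vector_mul_lid)
  then show ?case using gen_inv assms by simp
next
  case (gen_mult a b) then show ?case by (simp flip: matrix_vector_mul_assoc)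
qed

definition fixv :: "'n::finite cmat \<Rightarrow> (complex^'n) set" where
  "fixv A = {v. A *v v = v}"

lemma fixv_subspace: "vec.subspace (fixv (A::'n::finite cmat))"
  unfolding vec.subspace_def fixv_def by (simp add: vec.add vec.scale)

lemma fixspace_subspace: "vec.subspace (fixspace (G::'n::finite cmat set))"
  unfolding vec.subspace_def fixspace_def by (simp add: vec.add vec.scale)

lemma dim_le_n: "vec.dim (S::(complex^'n::finite) set) \<le> CARD('n)"
  using vec.dim_subset_UNIV[of S] by (simp add: vec.dimension_def card_cart_basis)

lemma full_dim: "vec.subspace (S::(complex^'n::finite) set) \<Longrightarrow> vec.dim S = CARD('n) \<Longrightarrow> S = UNIV"
  using vec.dim_eq_full[of S] vec.span_eq_iff[of S] by (simp add: vec.dimension_def card_cart_basis)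

lemma fix_univ_one: "fixv (A::'n::finite cmat) = UNIV \<Longrightarrow> A = mat 1"
  unfolding fixv_def by (auto simp: matrix_eq)

lemma root_exists:
  assumes "is_reflection (t::'n::finite cmat)"
  shows "\<exists>a. a \<noteq> 0 \<and> (\<forall>v. \<exists>c. t *v v - v = c *s a)"
proof -
  have d: "vec.dim (fixv t) = CARD('n) - 1" using assms unfolding is_reflection_def fixv_def by simp
  have "fixv t \<noteq> UNIV" using assms fix_univ_one unfolding is_reflection_def by blast
  then obtain u where u: "u \<notin> fixv t" by blast
  have sp: "vec.span (fixv t) = fixv t" using fixv_subspace by simp
  have u2: "u \<notin> vec.span (fixv t)" unfolding sp by (rule u)
  have "vec.dim (insert u (fixv t)) = CARD('n)"
    using u2 d vec.dim_insert[of u "fixv t"] by simp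
  then have "vec.span (insert u (fixv t)) = UNIV"
    using full_dim[of "vec.span (insert u (fixv t))"] by simp
  then have "\<forall>v. \<exists>k. v - k *s u \<in> fixv t"
    using vec.span_breakdown_eq[of _ u "fixv t"] sp by auto
  then have "\<forall>v. \<exists>k. t *v v - v = k *s (t *v u - u)"
    unfolding fixv_def by (auto simp: vec.diff vec.scale algebra_simps)
  moreover have "t *v u - u \<noteq> 0" using u unfolding fixv_def by simp
  ultimately show ?thesis by blast
qed

definition root :: "'n::finite cmat \<Rightarrow> complex^'n" where
  "root t = (SOME a. a \<noteq> 0 \<and> (\<forall>v. \<exists>c. t *v v - v = c *s a))"

lemma root: "is_reflection t \<Longrightarrow> root t \<noteq> 0 \<and> (\<forall>v. \<exists>c. t *v v - v = c *s root t)"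
  unfolding root_def by (rule someI_ex, rule root_exists)

lemma root_span: "is_reflection t \<Longrightarrow> t \<in> S \<Longrightarrow> t *v v - v \<in> vec.span (root ` S)"
  using root[of t] by (metis imageI vec.span_base vec.span_scale)


lemma dim_UNIV_n: "vec.dim (UNIV::(complex^'n::finite) set) = CARD('n)"
  by (simp add: card_cart_basis)

lemma averaging:
  fixes G :: "'n::finite cmat set" and R :: "(complex^'n) set"
  assumes fin: "finite G" and one: "mat 1 \<in> G" and mul: "\<forall>a\<in>G. \<forall>b\<in>G. a ** b \<in> G"
    and inv: "\<forall>a\<in>G. invertible a" and sp: "\<forall>p\<in>G. \<forall>v. v - p *v v \<in> vec.span R"
  shows "CARD('n) \<le> vec.dim (fixspace G) + vec.dim R"
proof -
  define c :: complex where "c = of_nat (card G)"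
  have c0: "c \<noteq> 0" using fin one unfolding c_def by (auto simp: card_eq_0_iff)
  define e where "e v = inverse c *s (\<Sum>p\<in>G. p *v v)" for v
  have inv_sum: "h *v (\<Sum>p\<in>G. p *v v) = (\<Sum>p\<in>G. p *v v)" if h: "h \<in> G" for h v
  proof -
    have injh: "inj_on (\<lambda>p. h ** p) G"
    proof (rule inj_onI)
      fix x y assume "h ** x = h ** y"
      then have "matrix_inv h ** (h ** x) = matrix_inv h ** (h ** y)" by simp
      then show "x = y" using minv[of h] inv h by (simp add: matrix_mul_assoc)
    qed
    have im: "(\<lambda>p. h ** p) ` G = G"
      using card_image[OF injh] mul h fin by (intro card_subset_eq) auto
    have "h *v (\<Sum>p\<in>G. p *v v) = (\<Sum>p\<in>G. h *v (p *v v))" by (rule vec.sum)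
    also have "\<dots> = (\<Sum>p\<in>G. (h ** p) *v v)" by (simp add: matrix_vector_mul_assoc)
    also have "\<dots> = (\<Sum>q\<in>(\<lambda>p. h ** p) ` G. q *v v)" by (simp add: sum.reindex[OF injh])
    also have "\<dots> = (\<Sum>p\<in>G. p *v v)" using im by simp
    finally show ?thesis .
  qed
  have efix: "e v \<in> fixspace G" for v
    unfolding fixspace_def e_def using inv_sum by (simp add: vec.scale)
  have ediff: "v - e v = inverse c *s (\<Sum>p\<in>G. v - p *v v)" for v
  proof -
    have cc: "(\<Sum>p\<in>G. v) = c *s v"
    proof (unfold vec_eq_iff, rule allI)
      fix i
      have "(\<Sum>p\<in>G. v) $ i = (\<Sum>p\<in>G. v $ i)" by (rule sum_component)
      also have "\<dots> = c * v $ i" unfolding c_def by (rule sum_constant)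
      finally show "(\<Sum>p\<in>G. v) $ i = (c *s v) $ i" by (simp only: vector_smult_component)
    qed
    have "(\<Sum>p\<in>G. v - p *v v) = c *s v - (\<Sum>p\<in>G. p *v v)"
      by (simp only: sum_subtractf cc)
    moreover have "inverse c *s (c *s v - (\<Sum>p\<in>G. p *v v)) = (inverse c * c) *s v - inverse c *s (\<Sum>p\<in>G. p *v v)"
      by (simp only: vec.scale_right_diff_distrib vec.scale_scale)
    moreover have "inverse c * c = 1" using c0 by simp
    ultimately show ?thesis unfolding e_def by (simp only: vec.scale_one)
  qed
  have espan: "v - e v \<in> vec.span R" for v
    unfolding ediff by (intro vec.span_scale vec.span_sum) (use sp in blast)
  have "UNIV \<subseteq> {x + y |x y. x \<in> fixspace G \<and> y \<in> vec.span R}"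
  proof
    fix v :: "complex^'n"
    have "v = e v + (v - e v)" by simp
    then show "v \<in> {x + y |x y. x \<in> fixspace G \<and> y \<in> vec.span R}" using efix espan by blast
  qed
  then have "CARD('n) \<le> vec.dim {x + y |x y. x \<in> fixspace G \<and> y \<in> vec.span R}"
    using vec.dim_subset[of "UNIV::(complex^'n) set"] unfolding dim_UNIV_n by blast
  also have "\<dots> \<le> vec.dim (fixspace G) + vec.dim (vec.span R)"
    using vec.dim_sums_Int[OF fixspace_subspace vec.subspace_span, of G R] by linarith
  finally show ?thesis by simp
qed

lemma rg_inv: "reflection_group W \<Longrightarrow> w \<in> W \<Longrightarrow> invertible w"
  unfolding reflection_group_def by blast

lemma rg_gen: "reflection_group (W::'n::finite cmat set) \<Longrightarrow> S \<subseteq> W \<Longrightarrow> gen S \<subseteq> W"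
proof -
  assume rg: "reflection_group W" and S: "S \<subseteq> W"
  have e: "W = gen (refls W)" using rg unfolding reflection_group_def by blast
  have "\<forall>s\<in>refls W. invertible s" using rg unfolding reflection_group_def refls_def by blast
  then show ?thesis using gen_sub[of "refls W" S] S e by blast
qed

lemma rg_one: "reflection_group (W::'n::finite cmat set) \<Longrightarrow> mat 1 \<in> W"
  using rg_gen[of W "{}"] gen.gen_one by blast

lemma rg_mult: "reflection_group (W::'n::finite cmat set) \<Longrightarrow> a \<in> W \<Longrightarrow> b \<in> W \<Longrightarrow> a ** b \<in> W"
proof -
  assume rg: "reflection_group W" and a: "a \<in> W" and b: "b \<in> W"
  have "a ** b \<in> gen {a, b}" by (intro gen.gen_mult gen.gen_elt) auto
  moreover have "gen {a, b} \<subseteq> W" using rg_gen[OF rg, of "{a,b}"] a b by blast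
  ultimately show ?thesis by blast
qed

lemma rg_minv: "reflection_group (W::'n::finite cmat set) \<Longrightarrow> a \<in> W \<Longrightarrow> matrix_inv a \<in> W"
  using rg_gen[of W "{a}"] gen.gen_inv by blast

lemma finite_order:
  assumes rg: "reflection_group (W::'n::finite cmat set)" and w: "w \<in> W"
  shows "\<exists>k>0. ((\<lambda>x. w ** x) ^^ k) (mat 1) = mat 1"
proof -
  define pw where "pw k = ((\<lambda>x. w ** x) ^^ k) (mat 1)" for k
  have pws: "pw (Suc k) = w ** pw k" for k unfolding pw_def by simp
  have pw0: "pw 0 = mat 1" unfolding pw_def by simp
  have pwadd: "pw (a + b) = pw a ** pw b" for a b
    by (induction a) (simp_all add: pw0 pws matrix_mul_assoc)
  have pwW: "pw k \<in> W" for k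
    by (induction k) (simp_all add: pw0 pws rg_one[OF rg] rg_mult[OF rg w])
  have fin: "finite W" using rg unfolding reflection_group_def by blast
  have "\<not> inj pw"
  proof
    assume "inj pw"
    then have "infinite (range pw)" using finite_imageD by blast
    moreover have "range pw \<subseteq> W" using pwW by blast
    ultimately show False using fin finite_subset by blast
  qed
  then obtain i j where ij: "i \<noteq> j" "pw i = pw j" unfolding inj_def by blast
  have "\<exists>i j. i < j \<and> pw i = pw j"
    using ij by (metis linorder_neqE_nat)
  then obtain i j where ij: "i < j" "pw i = pw j" by blast
  have "pw j = pw i ** pw (j - i)" using pwadd[of i "j - i"] ij by simp
  then have "pw i ** mat 1 = pw i ** pw (j - i)" using ij by simp
  then have "matrix_inv (pw i) ** (pw i ** mat 1) = matrix_inv (pw i) ** (pw i ** pw (j - i))" by simp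
  then have "pw (j - i) = mat 1"
    using minv[OF rg_inv[OF rg pwW[of i]]] by (simp add: matrix_mul_assoc)
  then show ?thesis using ij unfolding pw_def by (intro exI[of _ "j - i"]) simp
qed

lemma refl_intro:
  assumes rg: "reflection_group (W::'n::finite cmat set)" and w: "w \<in> W"
    and ne: "w \<noteq> mat 1" and d: "vec.dim (fixv w) = CARD('n) - 1"
  shows "w \<in> refls W"
proof -
  have "is_reflection w"
    unfolding is_reflection_def using finite_order[OF rg w] rg_inv[OF rg w] ne d
    unfolding fixv_def by simp
  then show ?thesis using w unfolding refls_def by simp
qed

lemma conj_fix:
  assumes t: "invertible (t::'n::finite cmat)"
  shows "fixv (t ** r ** matrix_inv t) = (\<lambda>v. t *v v) ` fixv r"
proof
  show "fixv (t ** r ** matrix_inv t) \<subseteq> (\<lambda>v. t *v v) ` fixv r"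
  proof
    fix x assume x: "x \<in> fixv (t ** r ** matrix_inv t)"
    define y where "y = matrix_inv t *v x"
    have xy: "x = t *v y" unfolding y_def using minv[OF t] by (simp add: matrix_vector_mul_assoc)
    have "r *v y = matrix_inv t *v ((t ** r ** matrix_inv t) *v x)"
      unfolding y_def using minv[OF t] by (simp add: matrix_vector_mul_assoc matrix_mul_assoc)
    also have "\<dots> = y" using x unfolding fixv_def y_def by simp
    finally show "x \<in> (\<lambda>v. t *v v) ` fixv r" using xy unfolding fixv_def by blast
  qed
next
  show "(\<lambda>v. t *v v) ` fixv r \<subseteq> fixv (t ** r ** matrix_inv t)"
  proof
    fix x assume "x \<in> (\<lambda>v. t *v v) ` fixv r"
    then obtain y where y: "r *v y = y" "x = t *v y" unfolding fixv_def by blast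
    have "(t ** r ** matrix_inv t) *v x = t *v (r *v ((matrix_inv t ** t) *v y))"
      using y by (simp add: matrix_vector_mul_assoc matrix_mul_assoc)
    also have "\<dots> = x" using minv[OF t] y by simp
    finally show "x \<in> fixv (t ** r ** matrix_inv t)" unfolding fixv_def by simp
  qed
qed

lemma conj_refl:
  assumes rg: "reflection_group (W::'n::finite cmat set)" and t: "t \<in> W" and r: "r \<in> refls W"
  shows "t ** r ** matrix_inv t \<in> refls W"
proof (rule refl_intro[OF rg])
  have rW: "r \<in> W" and rr: "is_reflection r" using r unfolding refls_def by auto
  have ti: "invertible t" using rg_inv[OF rg t] .
  show "t ** r ** matrix_inv t \<in> W" using rg_mult[OF rg] rg_minv[OF rg] t rW by blast
  show "t ** r ** matrix_inv t \<noteq> mat 1"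
  proof
    assume a: "t ** r ** matrix_inv t = mat 1"
    have "r = (matrix_inv t ** t) ** r ** (matrix_inv t ** t)" using minv[OF ti] by simp
    also have "\<dots> = matrix_inv t ** (t ** r ** matrix_inv t) ** t" by (simp add: matrix_mul_assoc)
    also have "\<dots> = mat 1" using a minv[OF ti] by simp
    finally have "r = mat 1" .
    then show False using rr unfolding is_reflection_def by blast
  qed
  have "vec.dim (fixv (t ** r ** matrix_inv t)) = vec.dim (fixv r)"
    unfolding conj_fix[OF ti]
    by (rule vec.dim_image_eq) (use inj_matrix_vector_mult[OF ti] in \<open>auto simp: inj_on_def\<close>)
  then show "vec.dim (fixv (t ** r ** matrix_inv t)) = CARD('n) - 1"
    using rr unfolding is_reflection_def fixv_def by simp
qed

lemma sq_refl:
  assumes rg: "reflection_group (W::'n::finite cmat set)" and r: "r \<in> refls W" and ne: "r ** r \<noteq> mat 1"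
  shows "r ** r \<in> refls W"
proof (rule refl_intro[OF rg _ ne])
  have rW: "r \<in> W" and rr: "is_reflection r" using r unfolding refls_def by auto
  show "r ** r \<in> W" using rg_mult[OF rg rW rW] .
  have sub: "fixv r \<subseteq> fixv (r ** r)" unfolding fixv_def by (auto simp flip: matrix_vector_mul_assoc)
  have "vec.dim (fixv r) = CARD('n) - 1" using rr unfolding is_reflection_def fixv_def by simp
  then have ge: "vec.dim (fixv (r ** r)) \<ge> CARD('n) - 1" using vec.dim_subset[OF sub] by simp
  have "vec.dim (fixv (r ** r)) \<noteq> CARD('n)"
    using full_dim[OF fixv_subspace] fix_univ_one ne by blast
  then show "vec.dim (fixv (r ** r)) = CARD('n) - 1" using ge dim_le_n[of "fixv (r ** r)"] by linarith
qed

lemma mprod_Nil[simp]: "mprod [] = mat 1" unfolding mprod_def by simp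
lemma mprod_Cons[simp]: "mprod (x # xs) = x ** mprod xs" unfolding mprod_def by simp
lemma mprod_append[simp]: "mprod (a @ b) = mprod a ** mprod b"
  by (induction a) (simp_all add: matrix_mul_assoc)

lemma mprod_conj:
  assumes t: "invertible (t::'n::finite cmat)"
  shows "mprod (map (\<lambda>y. t ** y ** matrix_inv t) ys) = t ** mprod ys ** matrix_inv t"
proof (induction ys)
  case Nil then show ?case using minv[OF t] by simp
next
  case (Cons y ys)
  have "mprod (map (\<lambda>y. t ** y ** matrix_inv t) (y # ys)) = (t ** y ** matrix_inv t) ** (t ** mprod ys ** matrix_inv t)"
    using Cons by simp
  also have "\<dots> = t ** y ** (matrix_inv t ** t) ** mprod ys ** matrix_inv t" by (simp add: matrix_mul_assoc)
  also have "\<dots> = t ** mprod (y # ys) ** matrix_inv t" using minv[OF t] by (simp add: matrix_mul_assoc)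
  finally show ?case .
qed

lemma refl_length_le: "set ts \<subseteq> refls W \<Longrightarrow> mprod ts = g \<Longrightarrow> refl_length W g \<le> length ts"
  unfolding refl_length_def by (rule Least_le) blast

lemma reduced_distinct:
  assumes rg: "reflection_group (W::'n::finite cmat set)" and red: "reduced_refl_fact W g ts"
  shows "distinct ts"
proof (rule ccontr)
  assume "\<not> distinct ts"
  then obtain xs t ys zs where ts: "ts = xs @ [t] @ ys @ [t] @ zs" using not_distinct_decomp by blast
  have sub: "set ts \<subseteq> refls W" and g: "mprod ts = g" and len: "length ts = refl_length W g"
    using red unfolding reduced_refl_fact_def by auto
  have tR: "t \<in> refls W" using sub ts by auto
  then have tW: "t \<in> W" unfolding refls_def by auto
  have ti: "invertible t" using rg_inv[OF rg tW] .
  define m where "m = (if t ** t = mat 1 then [] else [t ** t])"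
  define ts2 where "ts2 = xs @ map (\<lambda>y. t ** y ** matrix_inv t) ys @ m @ zs"
  have mm: "mprod m = t ** t" unfolding m_def by simp
  have "set m \<subseteq> refls W" unfolding m_def using sq_refl[OF rg tR] by auto
  moreover have "set (map (\<lambda>y. t ** y ** matrix_inv t) ys) \<subseteq> refls W"
    using conj_refl[OF rg tW] sub ts by auto
  ultimately have sub2: "set ts2 \<subseteq> refls W" unfolding ts2_def using sub ts by auto
  have "mprod ts2 = mprod xs ** ((t ** mprod ys ** matrix_inv t) ** ((t ** t) ** mprod zs))"
    unfolding ts2_def by (simp add: mprod_conj[OF ti] mm)
  also have "\<dots> = mprod xs ** (t ** mprod ys ** (matrix_inv t ** t) ** t ** mprod zs)"
    by (simp add: matrix_mul_assoc)
  also have "\<dots> = mprod ts" unfolding ts using minv[OF ti] by (simp add: matrix_mul_assoc)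
  finally have "mprod ts2 = g" using g by simp
  then have "refl_length W g \<le> length ts2" using refl_length_le[OF sub2] by blast
  moreover have "length ts2 < length ts" unfolding ts2_def ts m_def by simp
  ultimately show False using len by simp
qed

lemma mprod_span:
  assumes "\<forall>t\<in>S. is_reflection (t::'n::finite cmat)" "set ts \<subseteq> S"
  shows "mprod ts *v v - v \<in> vec.span (root ` S)"
  using assms(2)
proof (induction ts)
  case Nil then show ?case by (simp add: vec.span_zero)
next
  case (Cons t ts)
  have "mprod (t # ts) *v v - v = (t *v (mprod ts *v v) - mprod ts *v v) + (mprod ts *v v - v)"
    by (simp add: matrix_vector_mul_assoc)
  moreover have "t *v (mprod ts *v v) - mprod ts *v v \<in> vec.span (root ` S)"
    using root_span assms Cons by auto
  moreover have "mprod ts *v v - v \<in> vec.span (root ` S)" using Cons by auto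
  ultimately show ?case using vec.span_add by metis
qed

lemma gen_span:
  assumes refl: "\<forall>s\<in>S. is_reflection (s::'n::finite cmat)" and p: "p \<in> gen S"
  shows "\<forall>v. v - p *v v \<in> vec.span (root ` S)"
  using p
proof induction
  case gen_one then show ?case by (simp add: vec.span_zero)
next
  case (gen_elt s)
  show ?case
  proof
    fix v
    have "s *v v - v \<in> vec.span (root ` S)" using root_span refl gen_elt by blast
    then have "- (s *v v - v) \<in> vec.span (root ` S)" by (rule vec.span_neg)
    then show "v - s *v v \<in> vec.span (root ` S)" by simp
  qed
next
  case (gen_inv s)
  show ?case
  proof
    fix v
    have si: "invertible s" using refl gen_inv unfolding is_reflection_def by blast
    define w where "w = matrix_inv s *v v"
    have sw: "s *v w = v" unfolding w_def using minv[OF si] by (simp add: matrix_vector_mul_assoc)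
    have "s *v w - w \<in> vec.span (root ` S)" using root_span refl gen_inv by blast
    then show "v - matrix_inv s *v v \<in> vec.span (root ` S)" using sw unfolding w_def by simp
  qed
next
  case (gen_mult a b)
  show ?case
  proof
    fix v
    have "v - (a ** b) *v v = (v - b *v v) + (b *v v - a *v (b *v v))" by (simp add: matrix_vector_mul_assoc)
    then show "v - (a ** b) *v v \<in> vec.span (root ` S)" using gen_mult vec.span_add by metis
  qed
qed

lemma carter:
  assumes "distinct ts" "\<forall>t\<in>set ts. is_reflection (t::'n::finite cmat)"
    "vec.independent (root ` set ts)" "inj_on root (set ts)" "mprod ts *v v = v"
  shows "\<forall>t\<in>set ts. t *v v = v"
  using assms
proof (induction ts)
  case Nil then show ?case by simp
next
  case (Cons t ts)
  define w where "w = mprod ts *v v"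
  have tw: "t *v w = v" using Cons.prems(5) unfolding w_def by (simp add: matrix_vector_mul_assoc)
  have tr: "is_reflection t" using Cons.prems(2) by simp
  obtain c where c: "t *v w - w = c *s root t" using root[OF tr] by blast
  have d2: "w - v \<in> vec.span (root ` set ts)" unfolding w_def
    using mprod_span[of "set ts" ts v] Cons.prems(2) by auto
  have tn: "t \<notin> set ts" using Cons.prems(1) by simp
  have rn: "root t \<notin> root ` set ts" using Cons.prems(4) tn by (auto simp: inj_on_def)
  have ind: "vec.independent (insert (root t) (root ` set ts))" using Cons.prems(3) by simp
  then have nsp: "root t \<notin> vec.span (root ` set ts)" using rn vec.independent_insert by metis
  have c0: "c = 0"
  proof (rule ccontr)
    assume "c \<noteq> 0"
    have "c *s root t = - (w - v)" using c tw by simp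
    then have "c *s root t \<in> vec.span (root ` set ts)" using d2 vec.span_neg by metis
    then have "inverse c *s (c *s root t) \<in> vec.span (root ` set ts)" by (rule vec.span_scale)
    then show False using nsp \<open>c \<noteq> 0\<close> by simp
  qed
  then have "t *v w = w" using c by simp
  then have wv: "w = v" using tw by simp
  have "vec.independent (root ` set ts)"
    using vec.independent_mono[OF Cons.prems(3), of "root ` set ts"] by auto
  then have "\<forall>t\<in>set ts. t *v v = v"
    using Cons.IH Cons.prems wv unfolding w_def
    by (simp add: inj_on_insert)
  then show ?case using \<open>t *v w = w\<close> wv by simp
qed

lemma mprod_in_gen: "set ts \<subseteq> S \<Longrightarrow> mprod ts \<in> gen S"
  by (induction ts) (auto intro: gen.intros)

lemma fix_gen:
  assumes "\<forall>s\<in>S. invertible (s::'n::finite cmat)"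
  shows "fixspace (gen S) = {v. \<forall>s\<in>S. s *v v = v}"
  unfolding fixspace_def using gen_fix[of S] assms gen.gen_elt by blast

lemma pclosure_eq:
  assumes "g \<in> W"
  shows "pclosure W g = pstab W (fixv g)"
proof
  have "parabolic W (pstab W (fixv g))" unfolding parabolic_def by blast
  moreover have "g \<in> pstab W (fixv g)" using assms unfolding pstab_def fixv_def by auto
  ultimately show "pclosure W g \<subseteq> pstab W (fixv g)" unfolding pclosure_def by blast
next
  show "pstab W (fixv g) \<subseteq> pclosure W g"
    unfolding pclosure_def parabolic_def pstab_def fixv_def by blast
qed

lemma avg_gen:
  assumes rg: "reflection_group (W::'n::finite cmat set)" and S: "S \<subseteq> refls W"
  shows "CARD('n) \<le> vec.dim (fixspace (gen S)) + vec.dim (root ` S)"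
proof (rule averaging)
  have SW: "S \<subseteq> W" using S unfolding refls_def by auto
  have inv: "\<forall>s\<in>S. invertible s" using SW rg_inv[OF rg] by blast
  show "finite (gen S)" using rg_gen[OF rg SW] rg finite_subset unfolding reflection_group_def by blast
  show "mat 1 \<in> gen S" by (rule gen.gen_one)
  show "\<forall>a\<in>gen S. \<forall>b\<in>gen S. a ** b \<in> gen S" by (auto intro: gen.gen_mult)
  show "\<forall>a\<in>gen S. invertible a" using gen_closed[OF inv] by blast
  show "\<forall>p\<in>gen S. \<forall>v. v - p *v v \<in> vec.span (root ` S)"
  proof -
    have r: "\<forall>s\<in>S. is_reflection s" using S unfolding refls_def by blast
    show ?thesis
    proof
      fix p assume "p \<in> gen S"
      then show "\<forall>v. v - p *v v \<in> vec.span (root ` S)" by (rule gen_span[OF r])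
    qed
  qed
qed

theorem mainTheorem11:
  fixes W :: "'n::finite cmat set" and g :: "'n cmat"
  assumes "well_generated W"
    and "g \<in> W"
    and "parabolic_quasi_coxeter W g"
  shows "RGS_elt W g = RGS_sub W (pclosure W g)"
proof -
  have rg: "reflection_group W" using assms(1) unfolding well_generated_def by blast
  have Winv: "\<forall>w\<in>W. invertible w" using rg unfolding reflection_group_def by blast
  have Wgen: "W = gen (refls W)" using rg unfolding reflection_group_def by blast
  obtain ts P where red: "reduced_refl_fact W g ts" and par: "parabolic W P" and good: "good_gen_set (set ts) P"
    using assms(3) unfolding parabolic_quasi_coxeter_def by blast
  define S where "S = set ts"
  define k where "k = length ts"
  define n where "n = CARD('n)"
  have dist: "distinct ts" using reduced_distinct[OF rg red] .
  have cardS: "card S = k" unfolding S_def k_def using distinct_card[OF dist] .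
  have SR: "S \<subseteq> refls W" and gts: "mprod ts = g" and rl: "refl_length W g = k"
    using red unfolding reduced_refl_fact_def S_def k_def by auto
  have SW: "S \<subseteq> W" using SR unfolding refls_def by auto
  have Sinv: "\<forall>s\<in>S. invertible s" using SW Winv by blast
  have Srefl: "\<forall>s\<in>S. is_reflection s" using SR unfolding refls_def by auto
  have PS: "P = gen S" using good unfolding good_gen_set_def S_def by blast
  have grP: "grank P = k" using good cardS unfolding good_gen_set_def S_def by simp
  have dfixP: "vec.dim (fixspace P) = n - k" and kn: "k \<le> n"
    using grP dim_le_n[of "fixspace P"] unfolding grank_def n_def by auto
  have fixP: "fixspace P = {v. \<forall>s\<in>S. s *v v = v}" unfolding PS by (rule fix_gen[OF Sinv])
  have avg: "n \<le> vec.dim (fixspace P) + vec.dim (root ` S)"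
    unfolding PS n_def using avg_gen[OF rg SR] .
  have finS: "finite S" unfolding S_def by simp
  have dimR: "vec.dim (root ` S) \<ge> k" using avg dfixP kn by linarith
  have cR: "card (root ` S) \<le> k" using card_image_le[OF finS, of root] cardS by simp
  have dR: "vec.dim (root ` S) \<le> card (root ` S)"
    using vec.dim_le_card[of "root ` S" "root ` S"] finS vec.span_superset by blast
  have indep: "vec.independent (root ` S)"
  proof (rule vec.card_le_dim_spanning[of _ "root ` S"])
    show "root ` S \<subseteq> root ` S" by simp
    show "root ` S \<subseteq> vec.span (root ` S)" by (rule vec.span_superset)
    show "finite (root ` S)" using finS by simp
    show "card (root ` S) \<le> vec.dim (root ` S)" using dimR cR by linarith
  qed
  have injR: "inj_on root S"
    using eq_card_imp_inj_on[OF finS] cR dR dimR cardS by (metis card_image_le finS le_antisym order_trans)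
  have fixg: "fixv g = fixspace P"
  proof
    show "fixv g \<subseteq> fixspace P"
    proof
      fix v assume "v \<in> fixv g"
      then have "mprod ts *v v = v" using gts unfolding fixv_def by simp
      moreover have "\<forall>t\<in>set ts. is_reflection t" using Srefl S_def by simp
      moreover have "vec.independent (root ` set ts)" using indep S_def by simp
      moreover have "inj_on root (set ts)" using injR S_def by simp
      ultimately have "\<forall>t\<in>set ts. t *v v = v" using carter[OF dist] by blast
      then show "v \<in> fixspace P" unfolding fixP S_def by simp
    qed
  next
    have "g \<in> P" unfolding PS using mprod_in_gen[of ts S] gts by (simp add: S_def)
    then show "fixspace P \<subseteq> fixv g" unfolding fixspace_def fixv_def by blast
  qed
  have dfixg: "vec.dim (fixv g) = n - k" using fixg dfixP by simp
  define Wg where "Wg = pstab W (fixv g)"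
  have pc: "pclosure W g = Wg" unfolding Wg_def using pclosure_eq[OF assms(2)] .
  have gWg: "g \<in> Wg" using assms(2) unfolding Wg_def pstab_def fixv_def by auto
  have fixWg: "fixspace Wg = fixv g"
  proof
    show "fixspace Wg \<subseteq> fixv g" using gWg unfolding fixspace_def fixv_def by blast
    show "fixv g \<subseteq> fixspace Wg" unfolding fixspace_def Wg_def pstab_def by blast
  qed
  have grWg: "grank Wg = k" unfolding grank_def fixWg dfixg using kn by (simp add: n_def)
  have WgW: "Wg \<subseteq> W" unfolding Wg_def pstab_def by blast
  have WgP: "Wg \<subseteq> P"
  proof -
    obtain A where A: "P = pstab W A" using par unfolding parabolic_def by blast
    have "g \<in> P" unfolding PS using mprod_in_gen[of ts S] gts by (simp add: S_def)
    then have "A \<subseteq> fixv g" unfolding A pstab_def fixv_def by blast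
    then show ?thesis unfolding A Wg_def pstab_def by blast
  qed
  have key: "set ts' \<subseteq> Wg" if red': "reduced_refl_fact W g ts'" for ts'
  proof -
    define S' where "S' = set ts'"
    have SR': "S' \<subseteq> refls W" and gts': "mprod ts' = g" and len': "length ts' = k"
      using red' rl unfolding reduced_refl_fact_def S'_def by auto
    have SW': "S' \<subseteq> W" using SR' unfolding refls_def by auto
    have finS': "finite S'" unfolding S'_def by simp
    have "card S' \<le> k" unfolding S'_def using card_length[of ts'] len' by simp
    then have cR': "card (root ` S') \<le> k" using card_image_le[OF finS', of root] by simp
    have dR': "vec.dim (root ` S') \<le> card (root ` S')"
      using vec.dim_le_card[of "root ` S'" "root ` S'"] finS' vec.span_superset by blast
    have avg': "n \<le> vec.dim (fixspace (gen S')) + vec.dim (root ` S')"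
      unfolding n_def using avg_gen[OF rg SR'] .
    have ge: "vec.dim (fixspace (gen S')) \<ge> vec.dim (fixv g)" using avg' dR' cR' dfixg by linarith
    have gin: "g \<in> gen S'" using mprod_in_gen[of ts' S'] gts' by (simp add: S'_def)
    have sub: "fixspace (gen S') \<subseteq> fixv g" using gin unfolding fixspace_def fixv_def by blast
    have eq: "fixspace (gen S') = fixv g"
      by (rule vec.subspace_dim_equal[OF fixspace_subspace fixv_subspace sub ge])
    have "\<forall>t\<in>S'. \<forall>v\<in>fixv g. t *v v = v"
      using eq gen.gen_elt[of _ S'] unfolding fixspace_def by blast
    then show ?thesis using SW' unfolding Wg_def pstab_def S'_def by blast
  qed
  show ?thesis
  proof
    show "RGS_elt W g \<subseteq> RGS_sub W (pclosure W g)"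
    proof
      fix T assume "T \<in> RGS_elt W g"
      then obtain ts' where T: "finite T" "card T = grank W - refl_length W g" "T \<subseteq> refls W"
        and red': "reduced_refl_fact W g ts'" and gT: "gen (T \<union> set ts') = W"
        unfolding RGS_elt_def by blast
      have TW: "T \<subseteq> W" using T(3) unfolding refls_def by auto
      have "gen (Wg \<union> T) \<subseteq> W" using rg_gen[OF rg] WgW TW by blast
      moreover have "W \<subseteq> gen (Wg \<union> T)"
      proof -
        have "\<forall>s\<in>Wg \<union> T. invertible s" using WgW TW Winv by blast
        moreover have "T \<union> set ts' \<subseteq> gen (Wg \<union> T)" using key[OF red'] gen.gen_elt by blast
        ultimately show ?thesis using gen_sub gT by metis
      qed
      ultimately have "gen (Wg \<union> T) = W" by blast
      then show "T \<in> RGS_sub W (pclosure W g)"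
        unfolding RGS_sub_def pc using T rl grWg by simp
    qed
  next
    show "RGS_sub W (pclosure W g) \<subseteq> RGS_elt W g"
    proof
      fix T assume "T \<in> RGS_sub W (pclosure W g)"
      then have T: "finite T" "card T = grank W - grank Wg" "T \<subseteq> refls W" and gT: "gen (Wg \<union> T) = W"
        unfolding RGS_sub_def pc by auto
      have TW: "T \<subseteq> W" using T(3) unfolding refls_def by auto
      have inv2: "\<forall>s\<in>T \<union> set ts. invertible s" using TW SW Winv S_def by blast
      have "gen (T \<union> set ts) \<subseteq> W" using rg_gen[OF rg] TW SW S_def by blast
      moreover have "W \<subseteq> gen (T \<union> set ts)"
      proof -
        have "P \<subseteq> gen (T \<union> set ts)" unfolding PS S_def using gen_mono[OF inv2] by blast
        then have "Wg \<union> T \<subseteq> gen (T \<union> set ts)" using WgP gen.gen_elt by blast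
        then show ?thesis using gen_sub[OF inv2] gT by metis
      qed
      ultimately have "gen (T \<union> set ts) = W" by blast
      then show "T \<in> RGS_elt W g"
        unfolding RGS_elt_def using T red rl grWg by auto
    qed
  qed
qed

end
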